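(* Let $k=2r+1$ with $r\geq 1$ and $G=BS(1,k)$. Let $\mathcal{C}_o$ be the set of words over $\{a^{\pm1},t^{\pm1}\}$ \[\mathcal{C}_o=\{\epsilon,a^{\pm1},\ldots,a^{\pm(r+1)}\}\cup\{a^{x_0}ta^{x_1}t\cdots ta^{x_d}t^{-d}\mid d\geq1,\ x_0\neq0,\ x_d\neq0,\ A\},\] where $A$ denotes the conditions: $|x_d|\leq r+1$; $|x_i|\leq r$ for $0\le i<d$; and if $x_{d-1}=\pm r$ then $x_d\neq\mp1$. Then $\mathcal{C}_o$ is a set of unique geodesic representatives for the conjugacy classes of $G$ contained in the subgroup $\mathbb{Z}[1/k]$: every conjugacy class of $G$ contained in $\mathbb{Z}[1/k]$ is represented by exactly one word of $\mathcal{C}_o$, and each word of $\mathcal{C}_o$ is a geodesic word whose length equals the length of its conjugacy class.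
   Context: $BS(1,k)=\langle a,t\mid tat^{-1}=a^k\rangle\cong \mathbb{Z}[1/k]\rtimes\mathbb{Z}$ via $a\mapsto(1,0)$, $t\mapsto(0,1)$, where the generator of $\mathbb{Z}$ acts on $\mathbb{Z}[1/k]=\{x\in\mathbb{Q}: k^ex\in\mathbb{Z}\text{ for some }e\}$ by multiplication by $k$; the subgroup $\mathbb{Z}[1/k]$ consists of the elements $(x,0)$. For an integer $x$, $a^x$ denotes the word consisting of $|x|$ copies of $a$ (if $x>0$) or of $a^{-1}$ (if $x<0$); $\epsilon$ is the empty word. Word length is with respect to $\{a,t\}$; a word is geodesic if no shorter word represents the same element; the length of a conjugacy class is the minimal length of its elements. *)

theory Defs
  imports Complex_Main
begin

text \<open>BS(1,k) realised as Z[1/k] \<rtimes> Z, elements are pairs (x, n) with x a rational in Z[1/k].\<close>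

definition Zk :: "int \<Rightarrow> rat set" where
  "Zk k = {q. \<exists>e::nat. of_int k ^ e * q \<in> \<int>}"

definition BS :: "int \<Rightarrow> (rat \<times> int) set" where
  "BS k = {(x, n). x \<in> Zk k}"

definition bs_mult :: "int \<Rightarrow> rat \<times> int \<Rightarrow> rat \<times> int \<Rightarrow> rat \<times> int" where
  "bs_mult k g h = (fst g + (of_int k) powi (snd g) * fst h, snd g + snd h)"

definition bs_inv :: "int \<Rightarrow> rat \<times> int \<Rightarrow> rat \<times> int" where
  "bs_inv k g = (- ((of_int k) powi (- snd g)) * fst g, - snd g)"

definition bs_conj :: "int \<Rightarrow> rat \<times> int \<Rightarrow> rat \<times> int \<Rightarrow> bool" where
  "bs_conj k g h \<longleftrightarrow> (\<exists>u\<in>BS k. h = bs_mult k (bs_mult k u g) (bs_inv k u))"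

datatype gen = GA | GAi | GT | GTi

fun gen_val :: "gen \<Rightarrow> rat \<times> int" where
  "gen_val GA = (1, 0)"
| "gen_val GAi = (-1, 0)"
| "gen_val GT = (0, 1)"
| "gen_val GTi = (0, -1)"

definition eval_word :: "int \<Rightarrow> gen list \<Rightarrow> rat \<times> int" where
  "eval_word k w = foldr (\<lambda>g acc. bs_mult k (gen_val g) acc) w (0, 0)"

definition geodesic :: "int \<Rightarrow> gen list \<Rightarrow> bool" where
  "geodesic k w \<longleftrightarrow> (\<forall>v. eval_word k v = eval_word k w \<longrightarrow> length w \<le> length v)"

definition conj_class_minimal :: "int \<Rightarrow> gen list \<Rightarrow> bool" where
  "conj_class_minimal k w \<longleftrightarrow>
     (\<forall>v. bs_conj k (eval_word k w) (eval_word k v) \<longrightarrow> length w \<le> length v)"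

definition apow :: "int \<Rightarrow> gen list" where
  "apow x = (if x \<ge> 0 then replicate (nat x) GA else replicate (nat (- x)) GAi)"

text \<open>a^{x_0} t a^{x_1} t ... t a^{x_d} t^{-d}, where xs = [x_0, ..., x_d].\<close>
definition cword :: "int list \<Rightarrow> gen list" where
  "cword xs = concat (map (\<lambda>x. apow x @ [GT]) (butlast xs)) @ apow (last xs)
              @ replicate (length xs - 1) GTi"

definition C_o :: "int \<Rightarrow> gen list set" where
  "C_o r = {apow x | x. \<bar>x\<bar> \<le> r + 1} \<union>
     {cword xs | xs. let d = length xs - 1 in
        d \<ge> 1 \<and> xs ! 0 \<noteq> 0 \<and> xs ! d \<noteq> 0 \<and> \<bar>xs ! d\<bar> \<le> r + 1 \<and>
        (\<forall>i<d. \<bar>xs ! i\<bar> \<le> r) \<and>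
        (xs ! (d - 1) = r \<longrightarrow> xs ! d \<noteq> -1) \<and>
        (xs ! (d - 1) = - r \<longrightarrow> xs ! d \<noteq> 1)}"

end

theory Submission
  imports Defs
begin

definition bq :: "int \<Rightarrow> int \<Rightarrow> int" where
  "bq r N = (N + r) div (2*r+1)"
definition br :: "int \<Rightarrow> int \<Rightarrow> int" where
  "br r N = N - (2*r+1) * bq r N"

lemma bal_range: assumes "r \<ge> 1" shows "-r \<le> br r N \<and> br r N \<le> r \<and> N = br r N + (2*r+1) * bq r N"
proof -
  have "(N + r) mod (2*r+1) = (N + r) - (2*r+1) * ((N + r) div (2*r+1))"
    by (simp add: minus_div_mult_eq_mod[symmetric] mult.commute)
  hence "br r N = (N + r) mod (2*r+1) - r" unfolding br_def bq_def by simp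
  moreover have "0 \<le> (N + r) mod (2*r+1)" using assms by auto
  moreover have "(N + r) mod (2*r+1) < 2*r+1" using assms by (intro pos_mod_bound) auto
  ultimately show ?thesis unfolding br_def by auto
qed

lemma bal_char: assumes "r \<ge> 1" "N = p + (2*r+1) * q" "-r \<le> p" "p \<le> r"
  shows "bq r N = q \<and> br r N = p"
proof -
  have e: "N + r = (p + r) + (2*r+1) * q" using assms by simp
  moreover have "((p + r) + (2*r+1) * q) div (2*r+1) = (p + r) div (2*r+1) + q"
    using assms(1) by (simp add: mult.commute)
  moreover have "(p + r) div (2*r+1) = 0" using assms by (intro div_pos_pos_trivial) auto
  ultimately have "(N + r) div (2*r+1) = q" by (subst e) simp
  thus ?thesis unfolding br_def bq_def using assms by simp
qed

lemma bq_less: assumes "r \<ge> 1" "\<bar>N\<bar> > r + 1" shows "\<bar>bq r N\<bar> < \<bar>N\<bar>"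
proof -
  from bal_range[OF assms(1), of N] have h: "-r \<le> br r N" "br r N \<le> r" "N = br r N + (2*r+1) * bq r N" by auto
  show ?thesis
  proof (rule ccontr)
    assume "\<not> ?thesis"
    hence "\<bar>bq r N\<bar> \<ge> \<bar>N\<bar>" by simp
    have "\<bar>(2*r+1) * bq r N\<bar> = (2*r+1) * \<bar>bq r N\<bar>" using assms by (simp add: abs_mult)
    also have "\<dots> \<ge> 3 * \<bar>bq r N\<bar>" using assms by (intro mult_right_mono) auto
    finally have "\<bar>(2*r+1) * bq r N\<bar> \<ge> 3 * \<bar>N\<bar>" using \<open>\<bar>bq r N\<bar> \<ge> \<bar>N\<bar>\<close> by linarith
    thus False using h assms by linarith
  qed
qed

lemma bq_less_nat: "r \<ge> 1 \<Longrightarrow> \<not> \<bar>N\<bar> \<le> r + 1 \<Longrightarrow> nat \<bar>bq r N\<bar> < nat \<bar>N\<bar>"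
  using bq_less[of r N] by simp

function T :: "int \<Rightarrow> int \<Rightarrow> int" where
  "T r N = (if r < 1 \<or> \<bar>N\<bar> \<le> r + 1 then \<bar>N\<bar> else \<bar>br r N\<bar> + 2 + T r (bq r N))"
  by auto
termination
  by (relation "measure (\<lambda>(r,N). nat \<bar>N\<bar>)") (auto intro!: bq_less)

function dig :: "int \<Rightarrow> int \<Rightarrow> int list" where
  "dig r N = (if r < 1 \<or> \<bar>N\<bar> \<le> r + 1 then [N] else br r N # dig r (bq r N))"
  by auto
termination
  by (relation "measure (\<lambda>(r,N). nat \<bar>N\<bar>)") (auto intro!: bq_less)

declare T.simps[simp del] dig.simps[simp del]

lemma T_small: "r \<ge> 1 \<Longrightarrow> \<bar>N\<bar> \<le> r + 1 \<Longrightarrow> T r N = \<bar>N\<bar>"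
  by (simp add: T.simps)
lemma T_big: "r \<ge> 1 \<Longrightarrow> \<bar>N\<bar> > r + 1 \<Longrightarrow> T r N = \<bar>br r N\<bar> + 2 + T r (bq r N)"
  by (subst T.simps) simp

lemma T_big': assumes "r \<ge> 1" "\<bar>N\<bar> > r + 1" "N = p + (2*r+1) * q" "-r \<le> p" "p \<le> r"
  shows "T r N = \<bar>p\<bar> + 2 + T r q"
  using T_big[OF assms(1,2)] bal_char[OF assms(1,3,4,5)] by simp

lemma T_lip1: assumes "r \<ge> 1" shows "\<bar>T r (N+1) - T r N\<bar> \<le> 1"
proof (induction "nat \<bar>N\<bar>" arbitrary: N rule: less_induct)
  case less
  show ?case
  proof (cases "\<bar>N\<bar> \<le> r + 1 \<and> \<bar>N+1\<bar> \<le> r + 1")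
    case True thus ?thesis using T_small[OF assms] by simp
  next
    case False
    show ?thesis
    proof (cases "\<bar>N\<bar> \<le> r + 1")
      case True
      hence N: "N = r + 1" using False by auto
      have "T r (N+1) = \<bar>1 - r\<bar> + 2 + T r 1"
        using assms N by (intro T_big') auto
      moreover have "T r 1 = 1" using T_small[OF assms] assms by simp
      ultimately show ?thesis using T_small[OF assms True] N assms by simp
    next
      case False2: False
      show ?thesis
      proof (cases "\<bar>N+1\<bar> \<le> r + 1")
        case True
        hence N: "N = - r - 2" using False2 by auto
        have "T r N = \<bar>r - 1\<bar> + 2 + T r (-1)"
          using assms N by (intro T_big') auto
        moreover have "T r (-1) = 1" using T_small[OF assms] assms by simp
        ultimately show ?thesis using T_small[OF assms True] N assms by simp
      next
        case False3: False
        define p q where "p = br r N" and "q = bq r N"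
        from bal_range[OF assms, of N] have h: "-r \<le> p" "p \<le> r" "N = p + (2*r+1) * q"
          unfolding p_def q_def by auto
        have TN: "T r N = \<bar>p\<bar> + 2 + T r q" using T_big' assms False2 h by auto
        show ?thesis
        proof (cases "p = r")
          case True
          have "T r (N+1) = \<bar>-r\<bar> + 2 + T r (q+1)"
            using assms False3 h True by (intro T_big') (auto simp: algebra_simps)
          moreover have "nat \<bar>q\<bar> < nat \<bar>N\<bar>" using bq_less[OF assms, of N] False2 q_def by auto
          ultimately show ?thesis using less[of q] TN True by simp
        next
          case False
          have "T r (N+1) = \<bar>p+1\<bar> + 2 + T r q"
            using assms False3 h False by (intro T_big') (auto simp: algebra_simps)
          thus ?thesis using TN by simp
        qed
      qed
    qed
  qed
qed


lemma T_lip_nat: assumes "r \<ge> 1" shows "\<bar>T r (N + int n) - T r N\<bar> \<le> int n"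
proof (induction n)
  case 0 thus ?case by simp
next
  case (Suc n)
  have "\<bar>T r (N + int n + 1) - T r (N + int n)\<bar> \<le> 1" by (rule T_lip1[OF assms])
  thus ?case using Suc by (simp add: add.assoc add.commute[of 1])
qed

lemma T_lip: assumes "r \<ge> 1" shows "\<bar>T r (N + j) - T r N\<bar> \<le> \<bar>j\<bar>"
proof (cases "j \<ge> 0")
  case True thus ?thesis using T_lip_nat[OF assms, of N "nat j"] by simp
next
  case False
  have "\<bar>T r (N + j + int (nat (-j))) - T r (N + j)\<bar> \<le> int (nat (-j))" by (rule T_lip_nat[OF assms])
  thus ?thesis using False by simp
qed

lemma T_0: "r \<ge> 1 \<Longrightarrow> T r 0 = 0" by (simp add: T_small)

lemma T_le_abs: assumes "r \<ge> 1" shows "T r N \<le> \<bar>N\<bar>"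
  using T_lip[OF assms, of 0 N] T_0[OF assms] by simp

lemma T_nonneg: assumes "r \<ge> 1" shows "T r N \<ge> 0"
proof (induction "nat \<bar>N\<bar>" arbitrary: N rule: less_induct)
  case less
  show ?case
  proof (cases "\<bar>N\<bar> \<le> r + 1")
    case True thus ?thesis using T_small[OF assms] by simp
  next
    case False
    thus ?thesis using T_big[OF assms] less[of "bq r N"] bq_less[OF assms, of N] by force
  qed
qed

lemma T_kM: assumes "r \<ge> 1" "M \<noteq> 0" shows "T r ((2*r+1) * M) = 2 + T r M"
proof -
  have "\<bar>(2*r+1) * M\<bar> = (2*r+1) * \<bar>M\<bar>" using assms by (simp add: abs_mult)
  also have "\<dots> \<ge> (2*r+1) * 1" using assms by (intro mult_left_mono) auto
  finally have "\<bar>(2*r+1) * M\<bar> > r + 1" using assms by simp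
  thus ?thesis using assms by (subst T_big'[where p=0 and q=M]) auto
qed

lemma T_step: assumes "r \<ge> 1" shows "T r (p + (2*r+1) * M) \<le> \<bar>p\<bar> + 2 + T r M"
proof (cases "M = 0")
  case True thus ?thesis using T_le_abs[OF assms, of p] T_nonneg[OF assms, of 0] by simp
next
  case False
  have "T r ((2*r+1) * M + p) - T r ((2*r+1) * M) \<le> \<bar>p\<bar>" using T_lip[OF assms, of "(2*r+1) * M" p] by linarith
  thus ?thesis using T_kM[OF assms False] by (simp add: add.commute)
qed

lemma T_pow: assumes "r \<ge> 1" shows "T r y \<le> T r ((2*r+1)^j * y)"
proof (induction j)
  case 0 thus ?case by simp
next
  case (Suc j)
  show ?case
  proof (cases "(2*r+1)^j * y = 0")
    case True
    hence "y = 0" using assms by simp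
    thus ?thesis by simp
  next
    case False
    have "T r ((2*r+1)^Suc j * y) = 2 + T r ((2*r+1)^j * y)"
      using T_kM[OF assms False] by (simp add: mult.assoc)
    thus ?thesis using Suc by simp
  qed
qed

definition vl :: "int \<Rightarrow> int list \<Rightarrow> int" where
  "vl k xs = foldr (\<lambda>x acc. x + k * acc) xs 0"

lemma vl_Nil[simp]: "vl k [] = 0" and vl_Cons[simp]: "vl k (x # xs) = x + k * vl k xs"
  by (simp_all add: vl_def)

lemma vl_append: "vl k (xs @ ys) = vl k xs + k ^ length xs * vl k ys"
  by (induction xs) (auto simp: algebra_simps)

lemma vl_update: "i < length c \<Longrightarrow> vl k (c[i := c ! i + d]) = vl k c + k ^ i * d"
  by (induction c arbitrary: i) (auto simp: algebra_simps nth_Cons split: nat.splits)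

definition cost :: "int list \<Rightarrow> int" where
  "cost c = sum_list (map abs c) + 2 * (int (length c) - 1)"

lemma cost_ge: assumes "r \<ge> 1" shows "c \<noteq> [] \<Longrightarrow> T r (vl (2*r+1) c) \<le> cost c"
proof (induction c)
  case Nil thus ?case by simp
next
  case (Cons x c)
  show ?case
  proof (cases "c = []")
    case True thus ?thesis using T_le_abs[OF assms, of x] by (simp add: cost_def)
  next
    case False
    have "T r (vl (2*r+1) (x # c)) \<le> \<bar>x\<bar> + 2 + T r (vl (2*r+1) c)"
      using T_step[OF assms] by simp
    also have "\<dots> \<le> \<bar>x\<bar> + 2 + cost c" using Cons False by simp
    also have "\<dots> = cost (x # c)" using False by (simp add: cost_def)
    finally show ?thesis .
  qed
qed


fun canon :: "int \<Rightarrow> int list \<Rightarrow> bool" where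
  "canon r [] = False"
| "canon r [x] = (x \<noteq> 0 \<and> \<bar>x\<bar> \<le> r + 1)"
| "canon r (x # y # zs) = (\<bar>x\<bar> \<le> r \<and> canon r (y # zs) \<and>
      (zs = [] \<longrightarrow> (x = r \<longrightarrow> y \<noteq> -1) \<and> (x = -r \<longrightarrow> y \<noteq> 1)))"

lemma dig_small: "r \<ge> 1 \<Longrightarrow> \<bar>N\<bar> \<le> r + 1 \<Longrightarrow> dig r N = [N]"
  by (simp add: dig.simps)
lemma dig_big': assumes "r \<ge> 1" "\<bar>N\<bar> > r + 1" "N = p + (2*r+1) * q" "-r \<le> p" "p \<le> r"
  shows "dig r N = p # dig r q"
  using bal_char[OF assms(1,3,4,5)] assms(1,2) by (subst dig.simps) simp

lemma big_aux: fixes r V x :: int assumes "r \<ge> 1" "\<bar>V\<bar> \<ge> 2" "\<bar>x\<bar> \<le> r" shows "\<bar>x + (2*r+1) * V\<bar> > r + 1"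
proof -
  have "\<bar>(2*r+1) * V\<bar> = (2*r+1) * \<bar>V\<bar>" using assms by (simp add: abs_mult)
  also have "\<dots> \<ge> (2*r+1) * 2" using assms by (intro mult_left_mono) auto
  finally have "\<bar>(2*r+1) * V\<bar> \<ge> 4 * r + 2" by simp
  moreover have "\<bar>(2*r+1)*V\<bar> \<le> \<bar>x + (2*r+1)*V\<bar> + \<bar>x\<bar>" by arith
  ultimately show ?thesis using assms by linarith
qed

lemma canon_props:
  shows "canon r xs \<Longrightarrow> r \<ge> 1 \<Longrightarrow> T r (vl (2*r+1) xs) = cost xs \<and> (length xs \<ge> 2 \<longrightarrow> \<bar>vl (2*r+1) xs\<bar> > r + 1)
     \<and> dig r (vl (2*r+1) xs) = xs"
proof (induction r xs rule: canon.induct)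
  case (1 r) thus ?case by simp
next
  case (2 r x)
  hence "1 \<le> r" "\<bar>x\<bar> \<le> r + 1" by auto
  thus ?case using T_small[of r x] dig_small[of r x] 2 by (simp add: cost_def)
next
  case (3 r x y zs)
  hence assms: "r \<ge> 1" by simp
  define V where "V = vl (2*r+1) (y # zs)"
  from 3 have IH: "T r V = cost (y # zs)" "length (y#zs) \<ge> 2 \<longrightarrow> \<bar>V\<bar> > r + 1" "dig r V = y # zs"
    and x: "\<bar>x\<bar> \<le> r" unfolding V_def by auto
  have big: "\<bar>x + (2*r+1) * V\<bar> > r + 1"
  proof (cases zs)
    case Nil
    hence Vy: "V = y" unfolding V_def by simp
    have y: "y \<noteq> 0" "(x = r \<longrightarrow> y \<noteq> -1)" "(x = -r \<longrightarrow> y \<noteq> 1)" using 3 Nil by auto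
    show ?thesis
    proof (cases "\<bar>y\<bar> \<ge> 2")
      case True thus ?thesis using big_aux[OF assms True x] Vy by simp
    next
      case False
      hence "y = 1 \<or> y = -1" using y by auto
      thus ?thesis using y x Vy by auto
    qed
  next
    case (Cons z zs')
    hence "\<bar>V\<bar> > r + 1" using IH by simp
    thus ?thesis using big_aux[OF assms _ x, of V] assms by simp
  qed
  have vx: "vl (2*r+1) (x # y # zs) = x + (2*r+1) * V" unfolding V_def by simp
  have "T r (vl (2*r+1) (x # y # zs)) = \<bar>x\<bar> + 2 + T r V"
    unfolding vx using x big assms by (intro T_big') auto
  moreover have "dig r (vl (2*r+1) (x # y # zs)) = x # dig r V"
    unfolding vx using x big assms by (intro dig_big') auto
  ultimately show ?case using IH big vx by (simp add: cost_def del: vl_Cons)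
qed

lemma dig_canon: assumes "r \<ge> 1"
  shows "N \<noteq> 0 \<Longrightarrow> canon r (dig r N) \<and> vl (2*r+1) (dig r N) = N"
proof (induction "nat \<bar>N\<bar>" arbitrary: N rule: less_induct)
  case less
  show ?case
  proof (cases "\<bar>N\<bar> \<le> r + 1")
    case True thus ?thesis using dig_small[OF assms True] less by simp
  next
    case False
    define p q where "p = br r N" and "q = bq r N"
    from bal_range[OF assms, of N] have h: "-r \<le> p" "p \<le> r" "N = p + (2*r+1) * q"
      unfolding p_def q_def by auto
    have dN: "dig r N = p # dig r q" using dig_big'[OF assms _ h(3) h(1,2)] False by simp
    have q0: "q \<noteq> 0" using h False by auto
    have IH: "canon r (dig r q)" "vl (2*r+1) (dig r q) = q"
      using less.hyps[of q] q0 bq_less[OF assms, of N] False q_def by auto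
    obtain y zs where yz: "dig r q = y # zs" by (metis dig.simps list.exhaust neq_Nil_conv)
    have "zs = [] \<Longrightarrow> y = q" using IH(2) yz by simp
    moreover have "\<not> (p = r \<and> q = -1)" using h False by auto
    moreover have "\<not> (p = -r \<and> q = 1)" using h False by auto
    ultimately have "canon r (p # y # zs)" using IH yz h by auto
    thus ?thesis using dN yz IH h by simp
  qed
qed

definition idx :: "int \<Rightarrow> int list \<Rightarrow> bool" where
  "idx r xs = (let d = length xs - 1 in xs ! d \<noteq> 0 \<and> \<bar>xs ! d\<bar> \<le> r + 1 \<and>
        (\<forall>i<d. \<bar>xs ! i\<bar> \<le> r) \<and>
        (xs ! (d - 1) = r \<longrightarrow> xs ! d \<noteq> -1) \<and>
        (xs ! (d - 1) = - r \<longrightarrow> xs ! d \<noteq> 1))"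

lemma idx_canon: "length xs \<ge> 2 \<Longrightarrow> idx r xs = canon r xs"
proof (induction xs)
  case Nil thus ?case by simp
next
  case (Cons x xs)
  then obtain y zs where xs: "xs = y # zs" by (cases xs) auto
  show ?case
  proof (cases zs)
    case Nil
    have "(\<forall>i<Suc 0. \<bar>[x, y] ! i\<bar> \<le> r) = (\<bar>x\<bar> \<le> r)" by auto
    thus ?thesis using xs Nil by (auto simp: idx_def)
  next
    case (Cons z zs')
    have IH: "idx r (y # zs) = canon r (y # zs)" using Cons.IH xs Cons by simp
    let ?d = "length zs"
    have a: "(x # y # zs) ! (length (x # y # zs) - 1) = (y # zs) ! (length (y # zs) - 1)" by simp
    have b: "(x # y # zs) ! (length (x # y # zs) - 1 - 1) = (y # zs) ! (length (y # zs) - 1 - 1)"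
      using Cons by simp
    have c: "(\<forall>i<length (x # y # zs) - 1. \<bar>(x # y # zs) ! i\<bar> \<le> r) =
        (\<bar>x\<bar> \<le> r \<and> (\<forall>i<length (y # zs) - 1. \<bar>(y # zs) ! i\<bar> \<le> r))"
      by (auto simp: nth_Cons less_Suc_eq_0_disj)
    have "idx r (x # y # zs) = (\<bar>x\<bar> \<le> r \<and> idx r (y # zs))"
      unfolding idx_def Let_def a b c by blast
    thus ?thesis using IH xs Cons by simp
  qed
qed


section \<open>Words\<close>

lemma eval_Nil[simp]: "eval_word k [] = (0, 0)" by (simp add: eval_word_def)
lemma eval_Cons[simp]: "eval_word k (g # w) = bs_mult k (gen_val g) (eval_word k w)"
  by (simp add: eval_word_def)

lemma bs_mult_assoc: assumes "k \<noteq> 0"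
  shows "bs_mult k (bs_mult k g h) l = bs_mult k g (bs_mult k h l)"
  using assms by (simp add: bs_mult_def power_int_add algebra_simps)

lemma bs_mult_id: "bs_mult k (0, 0) h = h" by (simp add: bs_mult_def)

lemma eval_append: assumes "k \<noteq> 0"
  shows "eval_word k (u @ v) = bs_mult k (eval_word k u) (eval_word k v)"
  by (induction u) (simp_all add: bs_mult_id bs_mult_assoc[OF assms])

lemma eval_apow: "eval_word k (apow x) = (of_int x, 0)"
proof -
  have a: "eval_word k (replicate n GA) = (of_nat n, 0)" for n
    by (induction n) (simp_all add: bs_mult_def)
  have b: "eval_word k (replicate n GAi) = (- of_nat n, 0)" for n
    by (induction n) (simp_all add: bs_mult_def)
  show ?thesis by (simp add: apow_def a b)
qed

lemma length_apow: "int (length (apow x)) = \<bar>x\<bar>" by (simp add: apow_def)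

lemma eval_GTi: "eval_word k (replicate n GTi) = (0, - int n)"
  by (induction n) (simp_all add: bs_mult_def)

lemma eval_concat: assumes "k \<noteq> 0"
  shows "eval_word k (concat (map (\<lambda>x. apow x @ [GT]) ys) @ W) =
    (of_int (vl k ys) + of_int k ^ length ys * fst (eval_word k W), int (length ys) + snd (eval_word k W))"
proof (induction ys)
  case Nil thus ?case by simp
next
  case (Cons y ys)
  have "eval_word k (concat (map (\<lambda>x. apow x @ [GT]) (y # ys)) @ W) =
    bs_mult k (eval_word k (apow y)) (bs_mult k (0, 1) (eval_word k (concat (map (\<lambda>x. apow x @ [GT]) ys) @ W)))"
    by (simp add: eval_append[OF assms])
  thus ?case using Cons by (simp add: eval_apow bs_mult_def algebra_simps)
qed

lemma length_concat_apow: "int (length (concat (map (\<lambda>x. apow x @ [GT]) ys))) = sum_list (map abs ys) + int (length ys)"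
  by (induction ys) (simp_all add: length_apow[symmetric])

lemma cword_snoc: "cword (ys @ [z]) = concat (map (\<lambda>x. apow x @ [GT]) ys) @ apow z @ replicate (length ys) GTi"
  by (simp add: cword_def)

lemma eval_cword: assumes "k \<noteq> 0" "xs \<noteq> []"
  shows "eval_word k (cword xs) = (of_int (vl k xs), 0)"
proof -
  obtain ys z where xs: "xs = ys @ [z]" using assms(2) by (metis rev_exhaust)
  have "eval_word k (apow z @ replicate (length ys) GTi) = (of_int z, - int (length ys))"
    by (simp add: eval_append[OF assms(1)] eval_apow eval_GTi bs_mult_def)
  thus ?thesis unfolding xs cword_snoc eval_concat[OF assms(1)]
    by (simp add: vl_append)
qed

lemma length_cword: assumes "xs \<noteq> []" shows "int (length (cword xs)) = cost xs"
proof -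
  obtain ys z where xs: "xs = ys @ [z]" using assms by (metis rev_exhaust)
  show ?thesis unfolding xs cword_snoc using length_concat_apow[of ys] length_apow[of z]
    by (simp add: cost_def)
qed

lemma conj_D: assumes "k \<noteq> 0" "bs_conj k (x, 0) h" shows "\<exists>n. h = (of_int k powi n * x, 0)"
proof -
  from assms obtain y n where h: "h = bs_mult k (bs_mult k (y, n) (x, 0)) (bs_inv k (y, n))"
    unfolding bs_conj_def by auto
  have "of_int k powi n * (- (of_int k powi (- n)) * y) = - y"
    using assms(1) by (simp add: power_int_minus)
  hence "h = (of_int k powi n * x, 0)" unfolding h bs_mult_def bs_inv_def by (simp add: algebra_simps)
  thus ?thesis by blast
qed

lemma conj_I: "bs_conj k (x, 0) (of_int k powi n * x, 0)"
proof -
  have "(0, n) \<in> BS k" by (simp add: BS_def Zk_def)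
  moreover have "(of_int k powi n * x, 0) = bs_mult k (bs_mult k (0, n) (x, 0)) (bs_inv k (0, n))"
    by (simp add: bs_mult_def bs_inv_def)
  ultimately show ?thesis unfolding bs_conj_def by blast
qed


fun wd :: "gen list \<Rightarrow> int list \<times> int \<times> int" where
  "wd [] = ([0], 0, 0)"
| "wd (GA # v) = (case wd v of (c, m, e) \<Rightarrow> (c[nat (-m) := c ! nat (-m) + 1], m, e))"
| "wd (GAi # v) = (case wd v of (c, m, e) \<Rightarrow> (c[nat (-m) := c ! nat (-m) + (-1)], m, e))"
| "wd (GT # v) = (case wd v of (c, m, e) \<Rightarrow> if m = 0 then (0 # c, 0, e + 1) else (c, m + 1, e + 1))"
| "wd (GTi # v) = (case wd v of (c, m, e) \<Rightarrow>
      if m + int (length c) - 1 = 0 then (c @ [0], m - 1, e - 1) else (c, m - 1, e - 1))"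

lemma sum_abs_update: fixes c :: "int list" shows "i < length c \<Longrightarrow> sum_list (map abs (c[i := c ! i + d])) \<le> sum_list (map abs c) + \<bar>d\<bar>"
proof (induction c arbitrary: i)
  case Nil thus ?case by simp
next
  case (Cons a c)
  show ?case
  proof (cases i)
    case 0 thus ?thesis using abs_triangle_ineq[of a d] by simp
  next
    case (Suc j) thus ?thesis using Cons.IH[of j] Cons.prems by simp
  qed
qed

lemma powi_cancel: assumes "(k::int) \<noteq> 0" "m \<le> 0"
  shows "(of_int k :: rat) powi m * of_int k ^ nat (- m) = 1"
proof -
  have "(of_int k :: rat) ^ nat (- m) = of_int k powi (- m)" using assms by (simp add: power_int_def)
  thus ?thesis using assms by (simp add: power_int_minus)
qed

definition winv :: "int \<Rightarrow> gen list \<Rightarrow> int list \<Rightarrow> int \<Rightarrow> int \<Rightarrow> bool" where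
  "winv k v c m e \<longleftrightarrow> c \<noteq> [] \<and> m \<le> 0 \<and> 0 \<le> m + int (length c) - 1 \<and> m \<le> e \<and> e \<le> m + int (length c) - 1
     \<and> eval_word k v = (of_int k powi m * of_int (vl k c), e) \<and> cost c - \<bar>e\<bar> \<le> int (length v)"

lemma wd_inv: assumes "k \<noteq> 0" shows "wd v = (c, m, e) \<Longrightarrow> winv k v c m e"
proof (induction v arbitrary: c m e rule: wd.induct)
  case 1 thus ?case by (auto simp: winv_def cost_def)
next
  case (2 v)
  obtain c0 m0 e0 where w: "wd v = (c0, m0, e0)" by (cases "wd v") auto
  have I: "winv k v c0 m0 e0" using 2 w by simp
  let ?i = "nat (- m0)"
  have i: "?i < length c0" using I unfolding winv_def by auto
  have c: "c = c0[?i := c0 ! ?i + 1]" "m = m0" "e = e0" using 2 w by auto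
  have "vl k c = vl k c0 + k ^ ?i" using vl_update[OF i, of k 1] c by simp
  moreover have "(of_int k :: rat) powi m0 * of_int k ^ ?i = 1" using powi_cancel[OF assms] I unfolding winv_def by simp
  ultimately have ev: "of_int k powi m * of_int (vl k c) = 1 + of_int k powi m0 * (of_int (vl k c0) :: rat)"
    using c by (simp add: algebra_simps)
  have "cost c \<le> cost c0 + 1" using sum_abs_update[OF i, of 1] c by (simp add: cost_def)
  thus ?case using I c ev i unfolding winv_def by (auto simp: bs_mult_def)
next
  case (3 v)
  obtain c0 m0 e0 where w: "wd v = (c0, m0, e0)" by (cases "wd v") auto
  have I: "winv k v c0 m0 e0" using 3 w by simp
  let ?i = "nat (- m0)"
  have i: "?i < length c0" using I unfolding winv_def by auto
  have c: "c = c0[?i := c0 ! ?i + (-1)]" "m = m0" "e = e0" using 3 w by auto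
  have "vl k c = vl k c0 - k ^ ?i" using vl_update[OF i, of k "-1"] c by simp
  hence v: "(of_int (vl k c) :: rat) = of_int (vl k c0) - of_int k ^ ?i" by simp
  have p: "(of_int k :: rat) powi m0 * of_int k ^ ?i = 1" using powi_cancel[OF assms] I unfolding winv_def by simp
  have ev: "of_int k powi m * of_int (vl k c) = -1 + of_int k powi m0 * (of_int (vl k c0) :: rat)"
    unfolding v c(2) by (simp add: algebra_simps p)
  have "cost c \<le> cost c0 + 1" using sum_abs_update[OF i, of "-1"] c by (simp add: cost_def)
  thus ?case using I c ev i unfolding winv_def by (auto simp: bs_mult_def)
next
  case (4 v)
  obtain c0 m0 e0 where w: "wd v = (c0, m0, e0)" by (cases "wd v") auto
  have I: "winv k v c0 m0 e0" using 4 w by simp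
  show ?case
  proof (cases "m0 = 0")
    case True
    have c: "c = 0 # c0" "m = 0" "e = e0 + 1" using 4 w True by auto
    have "e0 \<ge> 0" using I True unfolding winv_def by auto
    thus ?thesis using I c True unfolding winv_def by (auto simp: bs_mult_def cost_def)
  next
    case False
    have c: "c = c0" "m = m0 + 1" "e = e0 + 1" using 4 w False by auto
    have "(of_int k :: rat) powi (m0 + 1) = of_int k * of_int k powi m0"
      using assms by (simp add: power_int_add_1')
    thus ?thesis using I c False unfolding winv_def by (auto simp: bs_mult_def)
  qed
next
  case (5 v)
  obtain c0 m0 e0 where w: "wd v = (c0, m0, e0)" by (cases "wd v") auto
  have I: "winv k v c0 m0 e0" using 5 w by simp
  have p: "(of_int k :: rat) powi (m0 - 1) = inverse (of_int k) * of_int k powi m0"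
    using assms by (simp add: power_int_diff field_simps)
  show ?case
  proof (cases "m0 + int (length c0) - 1 = 0")
    case True
    have c: "c = c0 @ [0]" "m = m0 - 1" "e = e0 - 1" using 5 w True by auto
    have "e0 \<le> 0" using I True unfolding winv_def by auto
    moreover have "vl k (c0 @ [0]) = vl k c0" by (simp add: vl_append)
    ultimately show ?thesis using I c True p unfolding winv_def by (auto simp: bs_mult_def cost_def power_int_minus)
  next
    case False
    have c: "c = c0" "m = m0 - 1" "e = e0 - 1" using 5 w False by auto
    thus ?thesis using I c False p unfolding winv_def by (auto simp: bs_mult_def power_int_minus)
  qed
qed


lemma powi_eq: fixes k a b :: int assumes "k \<noteq> 0" "(of_int a :: rat) = of_int k powi n * of_int b"
  shows "(0 \<le> n \<and> a = k ^ nat n * b) \<or> (n < 0 \<and> b = k ^ nat (- n) * a)"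
proof (cases "n \<ge> 0")
  case True
  hence "(of_int a :: rat) = of_int (k ^ nat n * b)" using assms by (simp add: power_int_def)
  hence "a = k ^ nat n * b" by (simp only: of_int_eq_iff)
  thus ?thesis using True by simp
next
  case False
  have "(of_int k :: rat) powi n = inverse (of_int k ^ nat (- n))"
    using False by (simp add: power_int_def power_inverse)
  hence "(of_int b :: rat) = of_int (k ^ nat (- n) * a)" using assms by (simp add: field_simps)
  hence "b = k ^ nat (- n) * a" by (simp only: of_int_eq_iff)
  thus ?thesis using False by simp
qed

definition normal :: "int \<Rightarrow> int \<Rightarrow> bool" where
  "normal k y \<longleftrightarrow> y = 0 \<or> \<not> k dvd y"

lemma same_class: fixes k y1 y2 :: int assumes "k \<ge> 2" "normal k y1" "normal k y2"
  "(of_int y2 :: rat) = of_int k powi n * of_int y1" shows "y1 = y2"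
proof -
  have k0: "k \<noteq> 0" using assms by simp
  from powi_eq[OF k0 assms(4)] show ?thesis
  proof
    assume h: "0 \<le> n \<and> y2 = k ^ nat n * y1"
    show ?thesis
    proof (cases "nat n = 0")
      case True thus ?thesis using h by simp
    next
      case False
      hence "k dvd y2" using h by (simp add: dvd_power)
      hence "y2 = 0" using assms(3) by (simp add: normal_def)
      thus ?thesis using h k0 by simp
    qed
  next
    assume h: "n < 0 \<and> y1 = k ^ nat (- n) * y2"
    hence "k dvd y1" by (simp add: dvd_power)
    hence "y1 = 0" using assms(2) by (simp add: normal_def)
    thus ?thesis using h k0 by simp
  qed
qed

lemma minimal: assumes "r \<ge> 1" "eval_word (2*r+1) v = (of_int (2*r+1) powi n * of_int y, 0)"
  "normal (2*r+1) y"
  shows "T r y \<le> int (length v)"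
proof -
  let ?k = "2*r+1"
  have k0: "?k \<noteq> 0" using assms by simp
  obtain c m e where w: "wd v = (c, m, e)" by (cases "wd v") auto
  have I: "winv ?k v c m e" by (rule wd_inv[OF k0 w])
  hence e: "e = 0" and ev: "of_int ?k powi m * of_int (vl ?k c) = (of_int ?k powi n * of_int y :: rat)"
    and cst: "cost c \<le> int (length v)" and cne: "c \<noteq> []"
    using assms(2) unfolding winv_def by auto
  have "(of_int (vl ?k c) :: rat) = of_int ?k powi (-m) * (of_int ?k powi m * of_int (vl ?k c))"
    using k0 by (simp add: power_int_minus)
  also have "\<dots> = of_int ?k powi (n - m) * of_int y"
    unfolding ev using k0 by (simp add: power_int_diff power_int_minus field_simps)
  finally have eq: "(of_int (vl ?k c) :: rat) = of_int ?k powi (n - m) * of_int y" .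
  from powi_eq[OF k0 eq] show ?thesis
  proof
    assume h: "0 \<le> n - m \<and> vl ?k c = ?k ^ nat (n - m) * y"
    have "T r y \<le> T r (vl ?k c)" using h T_pow[OF assms(1)] by simp
    also have "\<dots> \<le> cost c" by (rule cost_ge[OF assms(1) cne])
    finally show ?thesis using cst by simp
  next
    assume h: "n - m < 0 \<and> y = ?k ^ nat (- (n - m)) * vl ?k c"
    hence "?k dvd y" by (simp add: dvd_power)
    hence "y = 0" using assms(3) by (simp add: normal_def)
    thus ?thesis using T_0[OF assms(1)] by simp
  qed
qed


definition canw :: "int \<Rightarrow> int \<Rightarrow> gen list" where
  "canw r y = (if \<bar>y\<bar> \<le> r + 1 then apow y else cword (dig r y))"

lemma small_normal: assumes "r \<ge> 1" "\<bar>y\<bar> \<le> r + 1" shows "normal (2*r+1) y"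
proof -
  have "y \<noteq> 0 \<Longrightarrow> (2*r+1) dvd y \<Longrightarrow> False"
    using dvd_imp_le_int[of y "2*r+1"] assms by simp
  thus ?thesis unfolding normal_def by blast
qed

lemma Co_props: assumes "r \<ge> 1" "w \<in> C_o r"
  shows "\<exists>y. eval_word (2*r+1) w = (of_int y, 0) \<and> T r y = int (length w) \<and> normal (2*r+1) y \<and> w = canw r y"
proof -
  have k0: "2*r+1 \<noteq> 0" using assms by simp
  from assms(2) consider (a) x where "w = apow x" "\<bar>x\<bar> \<le> r + 1"
    | (b) xs where "w = cword xs" "length xs - 1 \<ge> 1" "xs ! 0 \<noteq> 0" "idx r xs"
    unfolding C_o_def idx_def Let_def by blast
  thus ?thesis
  proof cases
    case a
    thus ?thesis using T_small[OF assms(1) a(2)] small_normal[OF assms(1) a(2)]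
      by (intro exI[of _ x]) (simp add: eval_apow length_apow canw_def)
  next
    case b
    have len: "length xs \<ge> 2" using b by simp
    have can: "canon r xs" using idx_canon[OF len] b by simp
    note cp = canon_props[OF can assms(1)]
    have xne: "xs \<noteq> []" using len by auto
    obtain x0 rest where xs: "xs = x0 # rest" using xne by (cases xs) auto
    have x0: "\<bar>x0\<bar> \<le> r" "x0 \<noteq> 0" using can b len xs by (cases rest; auto)+
    have nrm: "normal (2*r+1) (vl (2*r+1) xs)"
    proof -
      have "(2*r+1) dvd (x0 + (2*r+1) * vl (2*r+1) rest) \<Longrightarrow> False"
      proof -
        assume "(2*r+1) dvd (x0 + (2*r+1) * vl (2*r+1) rest)"
        hence "(2*r+1) dvd x0" by (simp add: dvd_add_left_iff)
        thus False using dvd_imp_le_int[of x0 "2*r+1"] x0 assms by simp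
      qed
      thus ?thesis unfolding normal_def xs by auto
    qed
    show ?thesis
      using cp len nrm b(1) eval_cword[OF k0 xne] length_cword[OF xne]
      by (intro exI[of _ "vl (2*r+1) xs"]) (auto simp: canw_def)
  qed
qed

lemma existence: assumes "r \<ge> 1" "normal (2*r+1) y"
  shows "canw r y \<in> C_o r \<and> eval_word (2*r+1) (canw r y) = (of_int y, 0)"
proof (cases "\<bar>y\<bar> \<le> r + 1")
  case True thus ?thesis unfolding canw_def C_o_def by (auto simp: eval_apow)
next
  case False
  have k0: "2*r+1 \<noteq> 0" using assms by simp
  define xs where "xs = dig r y"
  have y0: "y \<noteq> 0" using False assms by auto
  have dc: "canon r xs" "vl (2*r+1) xs = y" using dig_canon[OF assms(1) y0] xs_def by auto
  have xs: "xs = br r y # dig r (bq r y)" using False assms(1) unfolding xs_def by (subst dig.simps) simp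
  have len: "length xs \<ge> 2" unfolding xs by (subst dig.simps) simp
  have "br r y \<noteq> 0"
  proof
    assume "br r y = 0"
    hence "y = (2*r+1) * bq r y" using bal_range[OF assms(1), of y] by simp
    thus False using assms(2) y0 unfolding normal_def by (metis dvd_triv_left)
  qed
  hence x0: "xs ! 0 \<noteq> 0" unfolding xs by simp
  have id: "idx r xs" using idx_canon[OF len] dc by simp
  have "cword xs \<in> C_o r"
    unfolding C_o_def using len x0 id unfolding idx_def Let_def
    by (intro UnI2 CollectI exI[of _ xs]) auto
  moreover have "eval_word (2*r+1) (cword xs) = (of_int y, 0)"
  proof -
    have xne: "xs \<noteq> []" using len by auto
    show ?thesis using eval_cword[OF k0 xne] dc(2) by simp
  qed
  ultimately show ?thesis using False unfolding canw_def xs_def by simp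
qed

lemma strip: assumes "(k::int) \<ge> 2" shows "N \<noteq> 0 \<Longrightarrow> \<exists>j y. N = k ^ j * y \<and> \<not> k dvd y"
proof (induction "nat \<bar>N\<bar>" arbitrary: N rule: less_induct)
  case less
  show ?case
  proof (cases "k dvd N")
    case False thus ?thesis by (intro exI[of _ 0] exI[of _ N]) simp
  next
    case True
    then obtain M where M: "N = k * M" by blast
    have M0: "M \<noteq> 0" using M less.prems by auto
    have "\<bar>N\<bar> = k * \<bar>M\<bar>" using M assms by (simp add: abs_mult)
    hence "nat \<bar>M\<bar> < nat \<bar>N\<bar>" using assms M0 by simp
    then obtain j y where "M = k ^ j * y" "\<not> k dvd y" using less.hyps[of M] M0 by blast
    thus ?thesis using M by (intro exI[of _ "Suc j"] exI[of _ y]) auto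
  qed
qed


lemma class_rep: assumes "r \<ge> 1" "x \<in> Zk (2*r+1)"
  shows "\<exists>y m. normal (2*r+1) y \<and> (of_int y :: rat) = of_int (2*r+1) powi m * x"
proof -
  let ?k = "2*r+1"
  have k2: "?k \<ge> 2" using assms by simp
  from assms(2) obtain e :: nat where "of_int ?k ^ e * x \<in> \<int>" unfolding Zk_def by auto
  then obtain N where N: "of_int ?k ^ e * x = (of_int N :: rat)" by (metis Ints_cases)
  show ?thesis
  proof (cases "N = 0")
    case True
    hence "x = 0" using N k2 by simp
    thus ?thesis by (intro exI[of _ 0] exI[of _ 0]) (simp add: normal_def)
  next
    case False
    then obtain j y where jy: "N = ?k ^ j * y" "\<not> ?k dvd y" using strip[OF k2] by blast
    have "(of_int y :: rat) = of_int ?k powi (int e - int j) * x"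
    proof -
      have "(of_int ?k :: rat) ^ j * of_int y = of_int ?k ^ e * x" using N jy by simp
      hence "(of_int y :: rat) = of_int ?k ^ e * x / of_int ?k ^ j" using k2 by (simp add: field_simps)
      also have "\<dots> = of_int ?k powi (int e - int j) * x" using k2 by (simp add: power_int_diff)
      finally show ?thesis .
    qed
    thus ?thesis using jy by (intro exI[of _ y] exI[of _ "int e - int j"]) (simp add: normal_def)
  qed
qed

theorem proposition3p2:
  fixes r k :: int
  assumes "r \<ge> 1" and "k = 2 * r + 1"
  shows "(\<forall>w\<in>C_o r. snd (eval_word k w) = 0)
     \<and> (\<forall>x\<in>Zk k. \<exists>!w. w \<in> C_o r \<and> bs_conj k (x, 0) (eval_word k w))
     \<and> (\<forall>w\<in>C_o r. geodesic k w \<and> conj_class_minimal k w)"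
proof (intro conjI ballI)
  have k0: "k \<noteq> 0" and k2: "k \<ge> 2" using assms by auto
  {
    fix w assume "w \<in> C_o r"
    thus "snd (eval_word k w) = 0" using Co_props[OF assms(1)] assms(2) by force
  }
  {
    fix x assume x: "x \<in> Zk k"
    obtain y m where y: "normal k y" "(of_int y :: rat) = of_int k powi m * x"
      using class_rep[OF assms(1)] x assms(2) by blast
    have ex: "canw r y \<in> C_o r" "eval_word k (canw r y) = (of_int y, 0)"
      using existence[OF assms(1)] y assms(2) by auto
    show "\<exists>!w. w \<in> C_o r \<and> bs_conj k (x, 0) (eval_word k w)"
    proof (rule ex1I[of _ "canw r y"])
      show "canw r y \<in> C_o r \<and> bs_conj k (x, 0) (eval_word k (canw r y))"
        using ex y conj_I[of k x m] by simp
    next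
      fix w assume w: "w \<in> C_o r \<and> bs_conj k (x, 0) (eval_word k w)"
      obtain n where n: "eval_word k w = (of_int k powi n * x, 0)" using conj_D[OF k0] w by blast
      obtain y' where y': "eval_word k w = (of_int y', 0)" "normal k y'" "w = canw r y'"
        using Co_props[OF assms(1)] w assms(2) by blast
      have "(of_int y' :: rat) = of_int k powi n * x" using n y' by simp
      also have "x = of_int k powi (- m) * of_int y" using y(2) k0 by (simp add: power_int_minus)
      finally have "(of_int y' :: rat) = of_int k powi (n + - m) * of_int y"
        using k0 power_int_add[of "of_int k :: rat" n "- m"] by simp
      hence "y = y'" using same_class[OF k2 y(1) y'(2)] by blast
      thus "w = canw r y" using y' by simp
    qed
  }
  {
    fix w assume w: "w \<in> C_o r"
    obtain y where y: "eval_word k w = (of_int y, 0)" "T r y = int (length w)" "normal k y"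
      using Co_props[OF assms(1) w] assms(2) by blast
    have key: "length w \<le> length v" if "eval_word k v = (of_int k powi n * of_int y, 0)" for v n
      using minimal[OF assms(1), of v n y] that y assms(2) by simp
    show "geodesic k w" unfolding geodesic_def
      using key[of _ 0] y(1) by simp
    show "conj_class_minimal k w" unfolding conj_class_minimal_def
      using key conj_D[OF k0] y(1) by metis
  }
qed

end
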